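(* Let $d\ge 2$ and $t,k$ be positive integers. Let $\mathcal{S}$ be a finite collection of spheres in $\mathbb{R}^d$ whose intersection graph $G=G(\mathcal{S})$ does not contain $K_{t,t}$ as a subgraph, and suppose every nested subset of $\mathcal{S}$ has size at most $k$. Then for every positive integer $r$, $\mathrm{scol}_r(G)\le 2kt(2r+2)^d$.
   Context: A sphere in $\mathbb{R}^d$ is the boundary of a closed ball of positive radius; $B(S)$ is the closed ball with boundary $S$. $G(\mathcal{S})$ has vertex set $\mathcal{S}$, two spheres adjacent iff they intersect. A sphere $S'$ contains a different sphere $S$ if $B(S)\subseteq B(S')$; a collection is nested if of any two of its spheres one contains the other. Given a linear order $\le$ on $V(G)$ and $v\in V(G)$, a vertex $u$ is strongly $r$-reachable from $v$ if $u\le v$ and there is a $v$–$u$ path of length at most $r$ in which $u$ is the only vertex smaller than $v$; the $r$-width of $\le$ is the maximum over $v$ of the number of vertices strongly $r$-reachable from $v$, and $\mathrm{scol}_r(G)$ is the minimum $r$-width over all linear orders of $V(G)$. *)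

theory Defs
  imports "HOL-Analysis.Analysis"
begin

definition is_sphere :: "'a::euclidean_space set \<Rightarrow> bool" where
  "is_sphere S \<longleftrightarrow> (\<exists>c r. r > 0 \<and> S = sphere c r)"

definition sball :: "'a::euclidean_space set \<Rightarrow> 'a set" where
  "sball S = (THE B. \<exists>c r. r > 0 \<and> S = sphere c r \<and> B = cball c r)"

definition sphere_contains :: "'a::euclidean_space set \<Rightarrow> 'a set \<Rightarrow> bool" where
  "sphere_contains S' S \<longleftrightarrow> S \<noteq> S' \<and> sball S \<subseteq> sball S'"

definition nested :: "'a::euclidean_space set set \<Rightarrow> bool" where
  "nested N \<longleftrightarrow> (\<forall>S\<in>N. \<forall>S'\<in>N. S \<noteq> S' \<longrightarrow> sphere_contains S S' \<or> sphere_contains S' S)"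

definition sphere_adj :: "'a set \<Rightarrow> 'a set \<Rightarrow> bool" where
  "sphere_adj S S' \<longleftrightarrow> S \<noteq> S' \<and> S \<inter> S' \<noteq> {}"

text \<open>Graph (V, E) with E a symmetric irreflexive adjacency relation contains K_{t,t} as a subgraph.\<close>
definition contains_Ktt :: "'v set \<Rightarrow> ('v \<Rightarrow> 'v \<Rightarrow> bool) \<Rightarrow> nat \<Rightarrow> bool" where
  "contains_Ktt V E t \<longleftrightarrow> (\<exists>A B. A \<subseteq> V \<and> B \<subseteq> V \<and> A \<inter> B = {} \<and> card A = t \<and> card B = t
      \<and> (\<forall>a\<in>A. \<forall>b\<in>B. E a b))"

definition is_path :: "'v set \<Rightarrow> ('v \<Rightarrow> 'v \<Rightarrow> bool) \<Rightarrow> 'v list \<Rightarrow> bool" where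
  "is_path V E p \<longleftrightarrow> p \<noteq> [] \<and> distinct p \<and> set p \<subseteq> V \<and>
      (\<forall>i. Suc i < length p \<longrightarrow> E (p ! i) (p ! Suc i))"

text \<open>Linear order L on V given as a relation: (x,y) \<in> L means x \<le> y.
  u is strongly r-reachable from v.\<close>
definition strongly_reachable ::
    "'v set \<Rightarrow> ('v \<Rightarrow> 'v \<Rightarrow> bool) \<Rightarrow> 'v rel \<Rightarrow> nat \<Rightarrow> 'v \<Rightarrow> 'v \<Rightarrow> bool" where
  "strongly_reachable V E L r v u \<longleftrightarrow> (u, v) \<in> L \<and>
     (\<exists>p. is_path V E p \<and> hd p = v \<and> last p = u \<and> length p \<le> r + 1 \<and>
          (\<forall>w\<in>set p. w \<noteq> u \<longrightarrow> (v, w) \<in> L))"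

definition sreach_set :: "'v set \<Rightarrow> ('v \<Rightarrow> 'v \<Rightarrow> bool) \<Rightarrow> 'v rel \<Rightarrow> nat \<Rightarrow> 'v \<Rightarrow> 'v set" where
  "sreach_set V E L r v = {u \<in> V. strongly_reachable V E L r v u}"

definition r_width :: "'v set \<Rightarrow> ('v \<Rightarrow> 'v \<Rightarrow> bool) \<Rightarrow> 'v rel \<Rightarrow> nat \<Rightarrow> nat" where
  "r_width V E L r = Max (insert 0 ((\<lambda>v. card (sreach_set V E L r v)) ` V))"

definition scol :: "'v set \<Rightarrow> ('v \<Rightarrow> 'v \<Rightarrow> bool) \<Rightarrow> nat \<Rightarrow> nat" where
  "scol V E r = Min {r_width V E L r | L. linear_order_on V L}"

end

theory Submission
  imports Defs
begin

lemma sphere_unique: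
  fixes c c' :: "'a::euclidean_space"
  assumes r: "r > 0" and r': "r' > 0" and eq: "sphere c r = sphere c' r'"
  shows "c = c' \<and> r = r'"
proof -
  have cc: "c = c'"
  proof (rule ccontr)
    assume ne: "c \<noteq> c'"
    define D where "D = norm (c - c')"
    have D: "D > 0" using ne by (simp add: D_def)
    define u where "u = (1/D) *\<^sub>R (c - c')"
    have cu: "c - c' = D *\<^sub>R u" using D by (simp add: u_def)
    have nu: "norm u = 1" using D by (simp add: u_def D_def)
    have p: "c + r *\<^sub>R u \<in> sphere c r" using r nu by (simp add: dist_norm)
    have q: "c - r *\<^sub>R u \<in> sphere c r" using r nu by (simp add: dist_norm)
    have "norm (c + r *\<^sub>R u - c') = r'" using p eq by (auto simp: dist_norm norm_minus_commute)
    moreover have "c + r *\<^sub>R u - c' = (D + r) *\<^sub>R u" using cu by (simp add: algebra_simps)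
    ultimately have 1: "D + r = r'" using D r nu by simp
    have "norm (c - r *\<^sub>R u - c') = r'" using q eq by (auto simp: dist_norm norm_minus_commute)
    moreover have "c - r *\<^sub>R u - c' = (D - r) *\<^sub>R u" using cu by (simp add: algebra_simps)
    ultimately have 2: "\<bar>D - r\<bar> = r'" using D r nu by simp
    show False using 1 2 D r by linarith
  qed
  obtain e :: 'a where e: "norm e = 1" using vector_choose_size[of 1] by auto
  have "c + r *\<^sub>R e \<in> sphere c r" using r e by (simp add: dist_norm)
  hence "dist c' (c + r *\<^sub>R e) = r'" using eq by auto
  hence "r = r'" using cc r e by (simp add: dist_norm)
  thus ?thesis using cc by simp
qed

definition cen :: "'a::euclidean_space set \<Rightarrow> 'a" where
  "cen S = (SOME c. \<exists>r>0. S = sphere c r)"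
definition rad :: "'a::euclidean_space set \<Rightarrow> real" where
  "rad S = (SOME r. r > 0 \<and> S = sphere (cen S) r)"

lemma sphere_props:
  fixes S :: "'a::euclidean_space set"
  assumes "is_sphere S"
  shows "rad S > 0" "S = sphere (cen S) (rad S)" "sball S = cball (cen S) (rad S)"
proof -
  have ex: "\<exists>c r. r>0 \<and> S = sphere c r" using assms by (simp add: is_sphere_def)
  hence "\<exists>r>0. S = sphere (cen S) r" unfolding cen_def by (rule someI_ex[where P="\<lambda>c. \<exists>r>0. S = sphere c r"])
  hence h: "rad S > 0 \<and> S = sphere (cen S) (rad S)" unfolding rad_def by (rule someI_ex)
  thus "rad S > 0" "S = sphere (cen S) (rad S)" by auto
  show "sball S = cball (cen S) (rad S)"
    unfolding sball_def
  proof (rule the_equality)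
    show "\<exists>c r. r > 0 \<and> S = sphere c r \<and> cball (cen S) (rad S) = cball c r" using h by blast
  next
    fix B assume "\<exists>c r. r > 0 \<and> S = sphere c r \<and> B = cball c r"
    then obtain c r where cr: "r > 0" "S = sphere c r" "B = cball c r" by blast
    have "sphere c r = sphere (cen S) (rad S)" using cr(2) h by simp
    hence "c = cen S \<and> r = rad S" using sphere_unique[of r "rad S" c "cen S"] cr(1) h by blast
    thus "B = cball (cen S) (rad S)" using cr(3) by simp
  qed
qed


lemma spheres_meet:
  fixes c1 c2 :: "'a::euclidean_space"
  assumes dim: "DIM('a) \<ge> 2" and r1: "r1 > 0" and r2: "r2 > 0"
    and x1: "x \<in> cball c1 r1" and x2: "x \<in> cball c2 r2"
    and n1: "\<not> cball c1 r1 \<subseteq> cball c2 r2" and n2: "\<not> cball c2 r2 \<subseteq> cball c1 r1"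
  shows "sphere c1 r1 \<inter> sphere c2 r2 \<noteq> {}"
proof -
  define D where "D = dist c1 c2"
  have a: "D + r1 > r2" using n1 r1 by (auto simp: cball_subset_cball_iff D_def dist_commute)
  have b: "D + r2 > r1" using n2 r2 by (auto simp: cball_subset_cball_iff D_def dist_commute)
  have c: "D \<le> r1 + r2" using x1 x2 dist_triangle[of c1 c2 x] unfolding D_def
    by (auto simp: dist_commute)
  have D: "D > 0" using a b by linarith
  define u where "u = (1/D) *\<^sub>R (c1 - c2)"
  have cu: "c1 - c2 = D *\<^sub>R u" using D by (simp add: u_def)
  have nu: "norm u = 1" using D by (simp add: u_def D_def dist_norm)
  define y1 where "y1 = c1 - r1 *\<^sub>R u"
  define y2 where "y2 = c1 + r1 *\<^sub>R u"
  have y1s: "y1 \<in> sphere c1 r1" using r1 nu by (simp add: y1_def dist_norm)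
  have y2s: "y2 \<in> sphere c1 r1" using r1 nu by (simp add: y2_def dist_norm)
  have "y1 - c2 = (D - r1) *\<^sub>R u" using cu by (simp add: y1_def algebra_simps)
  hence d1: "dist y1 c2 = \<bar>D - r1\<bar>" using nu by (simp add: dist_norm)
  have "y2 - c2 = (D + r1) *\<^sub>R u" using cu by (simp add: y2_def algebra_simps)
  hence d2: "dist y2 c2 = D + r1" using nu D r1 by (simp add: dist_norm)
  have conn: "connected ((\<lambda>y. dist y c2) ` sphere c1 r1)"
    by (rule connected_continuous_image[OF _ connected_sphere[OF dim]]) (intro continuous_intros)
  have "r2 \<in> (\<lambda>y. dist y c2) ` sphere c1 r1"
  proof (rule connectedD_interval[OF conn, of "dist y1 c2" "dist y2 c2" r2])
    show "dist y1 c2 \<in> (\<lambda>y. dist y c2) ` sphere c1 r1" using y1s by blast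
    show "dist y2 c2 \<in> (\<lambda>y. dist y c2) ` sphere c1 r1" using y2s by blast
    show "dist y1 c2 \<le> r2" unfolding d1 using b c by arith
    show "r2 \<le> dist y2 c2" unfolding d2 using a by arith
  qed
  then obtain y where "y \<in> sphere c1 r1" "dist y c2 = r2" by auto
  thus ?thesis by (auto simp: dist_commute)
qed

lemma sphere_in_cball:
  fixes c cw :: "'a::euclidean_space"
  assumes "z \<in> sphere cw rw" "z \<in> cball c R" 
  shows "sphere cw rw \<subseteq> cball c (R + 2 * rw)"
proof
  fix y assume "y \<in> sphere cw rw"
  hence "dist z y \<le> 2 * rw" using assms dist_triangle[of z y cw] by (auto simp: dist_commute)
  thus "y \<in> cball c (R + 2 * rw)" using assms dist_triangle[of c y z] by auto
qed

lemma inner_ball: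
  fixes cu p :: "'a::euclidean_space"
  assumes rho: "\<rho> > 0" "\<rho> \<le> ru" and p: "p \<in> sphere cu ru"
  shows "\<exists>q. cball q \<rho> \<subseteq> cball cu ru \<and> cball q \<rho> \<subseteq> cball p (2 * \<rho>)"
proof -
  define q where "q = p + (\<rho> / ru) *\<^sub>R (cu - p)"
  have n: "norm (cu - p) = ru" using p by (simp add: dist_norm)
  have ru: "ru > 0" using rho by linarith
  have "q - p = (\<rho> / ru) *\<^sub>R (cu - p)" by (simp add: q_def)
  hence 1: "dist q p = \<rho>" using n ru rho by (simp add: dist_norm)
  have "cu - q = (1 - \<rho> / ru) *\<^sub>R (cu - p)" by (simp add: q_def algebra_simps)
  moreover have "1 - \<rho> / ru \<ge> 0" using rho ru by (simp add: field_simps)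
  ultimately have "dist q cu = (1 - \<rho> / ru) * ru" using n by (simp add: dist_norm norm_minus_commute)
  moreover have "(1 - \<rho> / ru) * ru = ru - \<rho>" using ru by (simp add: algebra_simps)
  ultimately have 2: "dist q cu = ru - \<rho>" by simp
  show ?thesis using 1 2 by (intro exI[of _ q]) (auto simp: cball_subset_cball_iff)
qed


lemma sball_rad_le:
  assumes "is_sphere a" "is_sphere b" "sball a \<subseteq> sball b"
  shows "rad a \<le> rad b"
proof -
  have "dist (cen a) (cen b) + rad a \<le> rad b"
    using assms sphere_props[OF assms(1)] sphere_props[OF assms(2)]
    by (auto simp: cball_subset_cball_iff)
  thus ?thesis using zero_le_dist[of "cen a" "cen b"] by linarith
qed

lemma sball_eq_sphere:
  assumes "is_sphere a" "is_sphere b" "sball a \<subseteq> sball b" "rad b \<le> rad a"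
  shows "a = b"
proof -
  have "dist (cen a) (cen b) + rad a \<le> rad b"
    using assms sphere_props[OF assms(1)] sphere_props[OF assms(2)]
    by (auto simp: cball_subset_cball_iff)
  hence "dist (cen a) (cen b) = 0" "rad a = rad b" using assms(4) zero_le_dist[of "cen a" "cen b"] by linarith+
  hence "cen a = cen b" "rad a = rad b" by auto
  thus ?thesis using sphere_props[OF assms(1)] sphere_props[OF assms(2)] by metis
qed

lemma clique_Ktt:
  assumes "finite Q" "Q \<subseteq> V" "card Q \<ge> 2 * t"
    and "\<forall>a\<in>Q. \<forall>b\<in>Q. a \<noteq> b \<longrightarrow> E a b"
  shows "contains_Ktt V E t"
proof -
  obtain Q2 where Q2: "Q2 \<subseteq> Q" "card Q2 = 2 * t" using obtain_subset_with_card_n[OF assms(3)] by metis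
  have fQ2: "finite Q2" using Q2 assms(1) finite_subset by blast
  obtain A where A: "A \<subseteq> Q2" "card A = t" using obtain_subset_with_card_n[of t Q2] Q2 by auto
  define B where "B = Q2 - A"
  have fA: "finite A" using A fQ2 finite_subset by blast
  have "card B = t" using A fQ2 Q2 by (simp add: B_def card_Diff_subset fA)
  moreover have "A \<subseteq> V" "B \<subseteq> V" "A \<inter> B = {}" using A Q2 assms(2) by (auto simp: B_def)
  moreover have "\<forall>a\<in>A. \<forall>b\<in>B. E a b"
  proof (intro ballI)
    fix a b assume a: "a \<in> A" and b: "b \<in> B"
    have "a \<in> Q" "b \<in> Q" "a \<noteq> b" using a b A Q2 by (auto simp: B_def)
    thus "E a b" using assms(4) by blast
  qed
  ultimately show ?thesis unfolding contains_Ktt_def using A by (intro exI[of _ A] exI[of _ B]) simp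
qed

lemma finite_max_elem:
  fixes f :: "'b \<Rightarrow> real"
  assumes "finite A" "A \<noteq> {}"
  obtains x where "x \<in> A" "\<forall>y\<in>A. f y \<le> f x"
proof -
  have "Max (f ` A) \<in> f ` A" using assms by (intro Max_in) auto
  then obtain x where x: "x \<in> A" "f x = Max (f ` A)" by auto
  have "\<forall>y\<in>A. f y \<le> f x" using assms x by auto
  thus ?thesis using x that by blast
qed

lemma comb_bound:
  fixes \<S> :: "'a::euclidean_space set set"
  assumes sph: "\<forall>S\<in>\<S>. is_sphere S" and noK: "\<not> contains_Ktt \<S> sphere_adj t"
  shows "finite P \<Longrightarrow> P \<subseteq> \<S> \<Longrightarrow>
     \<forall>a\<in>P. \<forall>b\<in>P. a \<noteq> b \<longrightarrow> sball a \<subseteq> sball b \<or> sball b \<subseteq> sball a \<or> sphere_adj a b \<Longrightarrow>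
     \<forall>N. N \<subseteq> P \<and> nested N \<longrightarrow> card N \<le> k \<Longrightarrow> card P \<le> k * (2 * t - 1)"
proof (induction k arbitrary: P)
  case 0
  have "P = {}"
  proof (rule ccontr)
    assume "P \<noteq> {}"
    then obtain a where "a \<in> P" by auto
    hence "{a} \<subseteq> P \<and> nested {a}" by (auto simp: nested_def)
    hence "card {a} \<le> 0" using "0.prems"(4) by blast
    thus False by simp
  qed
  thus ?case by simp
next
  case (Suc k)
  note fin = Suc.prems(1) and sub = Suc.prems(2) and cmp = Suc.prems(3) and nst = Suc.prems(4)
  have sphP: "\<And>a. a \<in> P \<Longrightarrow> is_sphere a" using sub sph by auto
  define M0 where "M0 = {a\<in>P. \<forall>b\<in>P. b \<noteq> a \<longrightarrow> \<not> sball a \<subseteq> sball b}"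
  have M0P: "M0 \<subseteq> P" by (auto simp: M0_def)
  have finM0: "finite M0" using fin M0P finite_subset by blast
  have adjM0: "\<forall>a\<in>M0. \<forall>b\<in>M0. a \<noteq> b \<longrightarrow> sphere_adj a b"
  proof (intro ballI impI)
    fix a b assume a: "a \<in> M0" and b: "b \<in> M0" and ab: "a \<noteq> b"
    have "\<not> sball a \<subseteq> sball b" "\<not> sball b \<subseteq> sball a" using a b ab unfolding M0_def by auto
    moreover have "a \<in> P" "b \<in> P" using a b M0P by auto
    ultimately show "sphere_adj a b" using cmp ab by blast
  qed
  have cM0: "card M0 \<le> 2 * t - 1"
  proof (rule ccontr)
    assume "\<not> card M0 \<le> 2 * t - 1"
    hence "card M0 \<ge> 2 * t" by linarith
    hence "contains_Ktt \<S> sphere_adj t"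
      using clique_Ktt[OF finM0 _ _ adjM0] M0P sub by blast
    thus False using noK by blast
  qed
  define P' where "P' = P - M0"
  have nst': "\<forall>N. N \<subseteq> P' \<and> nested N \<longrightarrow> card N \<le> k"
  proof (intro allI impI)
    fix N assume N: "N \<subseteq> P' \<and> nested N"
    show "card N \<le> k"
    proof (cases "N = {}")
      case True thus ?thesis by simp
    next
      case False
      have NP: "N \<subseteq> P" using N by (auto simp: P'_def)
      have finN: "finite N" using NP fin finite_subset by blast
      obtain n where n: "n \<in> N" "\<forall>a\<in>N. rad a \<le> rad n"
        using finite_max_elem[OF finN False, of rad] by blast
      have below: "\<forall>a\<in>N. sball a \<subseteq> sball n"
      proof
        fix a assume a: "a \<in> N"
        show "sball a \<subseteq> sball n"
        proof (cases "a = n")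
          case False
          hence "sphere_contains a n \<or> sphere_contains n a" using N a n(1) by (auto simp: nested_def)
          moreover have "\<not> sphere_contains a n"
          proof
            assume "sphere_contains a n"
            hence "sball n \<subseteq> sball a" by (simp add: sphere_contains_def)
            hence "n = a" using sball_eq_sphere[of n a] sphP NP a n by auto
            thus False using False by simp
          qed
          ultimately show ?thesis using False by (auto simp: sphere_contains_def)
        qed simp
      qed
      have nM0: "n \<notin> M0" using n(1) N by (auto simp: P'_def)
      define U where "U = {b\<in>P. sball n \<subseteq> sball b}"
      have finU: "finite U" using fin by (simp add: U_def)
      have nU: "n \<in> U" using n NP by (auto simp: U_def)
      obtain m where m: "m \<in> U" "\<forall>b\<in>U. rad b \<le> rad m"
        using finite_max_elem[OF finU, of rad] nU by blast
      have mP: "m \<in> P" using m by (simp add: U_def)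
      have mM0: "m \<in> M0"
        unfolding M0_def
      proof (intro CollectI conjI ballI impI mP)
        fix b assume b: "b \<in> P" "b \<noteq> m"
        show "\<not> sball m \<subseteq> sball b"
        proof
          assume h: "sball m \<subseteq> sball b"
          hence "b \<in> U" using m b by (auto simp: U_def)
          hence "rad b \<le> rad m" using m by auto
          hence "m = b" using sball_eq_sphere[of m b] h sphP b mP by auto
          thus False using b by simp
        qed
      qed
      have mN: "m \<notin> N" using mM0 N by (auto simp: P'_def)
      have "nested (insert m N)"
        using N unfolding nested_def
      proof (intro ballI impI)
        fix a b assume a: "a \<in> insert m N" and b: "b \<in> insert m N" and ab: "a \<noteq> b"
        have mabove: "\<And>x. x \<in> N \<Longrightarrow> sphere_contains m x"
          using below m(1) mN unfolding sphere_contains_def U_def by blast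
        have nN: "nested N" using N by simp
        show "sphere_contains a b \<or> sphere_contains b a"
        proof (cases "a = m")
          case True
          hence "b \<in> N" using b ab by auto
          thus ?thesis using mabove True by simp
        next
          case am: False
          show ?thesis
          proof (cases "b = m")
            case True
            hence "a \<in> N" using a am by auto
            thus ?thesis using mabove True by simp
          next
            case False
            hence "a \<in> N" "b \<in> N" using a b am by auto
            thus ?thesis using nN ab unfolding nested_def by simp
          qed
        qed
      qed
      moreover have "insert m N \<subseteq> P" using mP NP by auto
      ultimately have "card (insert m N) \<le> Suc k" using nst by simp
      thus ?thesis using mN finN by simp
    qed
  qed
  have "card P' \<le> k * (2 * t - 1)"
  proof (rule Suc.IH)
    show "finite P'" using fin by (simp add: P'_def)
    show "P' \<subseteq> \<S>" using sub by (auto simp: P'_def)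
    show "\<forall>a\<in>P'. \<forall>b\<in>P'. a \<noteq> b \<longrightarrow> sball a \<subseteq> sball b \<or> sball b \<subseteq> sball a \<or> sphere_adj a b"
      using cmp by (simp add: P'_def)
    show "\<forall>N. N \<subseteq> P' \<and> nested N \<longrightarrow> card N \<le> k" by (rule nst')
  qed
  moreover have "card P = card M0 + card P'"
    using fin M0P by (simp add: P'_def card_Diff_subset finM0 card_mono)
  ultimately show ?case using cM0 by simp
qed


lemma point_mult:
  fixes \<S> :: "'a::euclidean_space set set"
  assumes dim: "DIM('a) \<ge> 2" and sph: "\<forall>S\<in>\<S>. is_sphere S" and noK: "\<not> contains_Ktt \<S> sphere_adj t"
    and nst: "\<forall>N. N \<subseteq> \<S> \<and> nested N \<longrightarrow> card N \<le> k"
    and fin: "finite P" and sub: "P \<subseteq> \<S>" and x: "\<forall>u\<in>P. x \<in> sball u"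
  shows "card P \<le> k * (2 * t - 1)"
proof (rule comb_bound[OF sph noK fin sub])
  show "\<forall>N. N \<subseteq> P \<and> nested N \<longrightarrow> card N \<le> k" using nst sub by blast
  show "\<forall>a\<in>P. \<forall>b\<in>P. a \<noteq> b \<longrightarrow> sball a \<subseteq> sball b \<or> sball b \<subseteq> sball a \<or> sphere_adj a b"
  proof (intro ballI impI)
    fix a b assume a: "a \<in> P" and b: "b \<in> P" and ab: "a \<noteq> b"
    have sa: "is_sphere a" and sb: "is_sphere b" using a b sub sph by auto
    show "sball a \<subseteq> sball b \<or> sball b \<subseteq> sball a \<or> sphere_adj a b"
    proof (cases "sball a \<subseteq> sball b \<or> sball b \<subseteq> sball a")
      case False
      have xa: "x \<in> cball (cen a) (rad a)" using x a sphere_props(3)[OF sa] by auto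
      have xb: "x \<in> cball (cen b) (rad b)" using x b sphere_props(3)[OF sb] by auto
      have n1: "\<not> cball (cen a) (rad a) \<subseteq> cball (cen b) (rad b)"
        using False sphere_props(3)[OF sa] sphere_props(3)[OF sb] by auto
      have n2: "\<not> cball (cen b) (rad b) \<subseteq> cball (cen a) (rad a)"
        using False sphere_props(3)[OF sa] sphere_props(3)[OF sb] by auto
      have "sphere (cen a) (rad a) \<inter> sphere (cen b) (rad b) \<noteq> {}"
        by (rule spheres_meet[OF dim sphere_props(1)[OF sa] sphere_props(1)[OF sb] xa xb n1 n2])
      hence "a \<inter> b \<noteq> {}" using sphere_props(2)[OF sa] sphere_props(2)[OF sb] by simp
      hence "sphere_adj a b" using ab unfolding sphere_adj_def by simp
      thus ?thesis by simp
    qed blast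
  qed
qed

lemma count_bound:
  fixes \<S> :: "'a::euclidean_space set set" and c :: 'a
  assumes dim: "DIM('a) \<ge> 2" and sph: "\<forall>S\<in>\<S>. is_sphere S" and noK: "\<not> contains_Ktt \<S> sphere_adj t"
    and nst: "\<forall>N. N \<subseteq> \<S> \<and> nested N \<longrightarrow> card N \<le> k"
    and fin: "finite \<S>" and rho: "\<rho> > 0" and R: "R \<ge> 0"
  shows "real (card {u\<in>\<S>. \<rho> \<le> rad u \<and> u \<inter> cball c R \<noteq> {}}) * \<rho> ^ DIM('a)
           \<le> real (k * (2 * t - 1)) * (R + 2 * \<rho>) ^ DIM('a)"
proof -
  define F where "F = {u\<in>\<S>. \<rho> \<le> rad u \<and> u \<inter> cball c R \<noteq> {}}"
  define Big where "Big = cball c (R + 2 * \<rho>)"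
  define K where "K = k * (2 * t - 1)"
  have finF: "finite F" using fin by (simp add: F_def)
  have "\<forall>u\<in>F. \<exists>q. cball q \<rho> \<subseteq> sball u \<and> cball q \<rho> \<subseteq> Big"
  proof
    fix u assume u: "u \<in> F"
    have su: "is_sphere u" using u sph by (auto simp: F_def)
    obtain p where p: "p \<in> u" "p \<in> cball c R" using u by (auto simp: F_def)
    have ps: "p \<in> sphere (cen u) (rad u)" using p sphere_props[OF su] by auto
    obtain q where q: "cball q \<rho> \<subseteq> cball (cen u) (rad u)" "cball q \<rho> \<subseteq> cball p (2 * \<rho>)"
      using inner_ball[OF rho _ ps] u by (auto simp: F_def)
    have "cball p (2 * \<rho>) \<subseteq> Big" using p(2) by (auto simp: Big_def cball_subset_cball_iff dist_commute)
    thus "\<exists>q. cball q \<rho> \<subseteq> sball u \<and> cball q \<rho> \<subseteq> Big" using q sphere_props[OF su] by auto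
  qed
  then obtain q where q: "\<And>u. u \<in> F \<Longrightarrow> cball (q u) \<rho> \<subseteq> sball u \<and> cball (q u) \<rho> \<subseteq> Big"
    by metis
  define b where "b u = cball (q u) \<rho>" for u
  have pw: "(\<Sum>u\<in>F. indicator (b u) x) \<le> of_nat K * (indicator Big x :: ennreal)" for x
  proof -
    have eq: "(\<Sum>u\<in>F. indicator (b u) x :: ennreal) = of_nat (card {u\<in>F. x \<in> b u})"
      using finF by (simp add: indicator_def sum.If_cases Int_def)
    show ?thesis
    proof (cases "x \<in> Big")
      case False
      hence "{u\<in>F. x \<in> b u} = {}" using q unfolding b_def by blast
      thus ?thesis using eq by simp
    next
      case True
      have "card {u\<in>F. x \<in> b u} \<le> K" unfolding K_def
      proof (rule point_mult[OF dim sph noK nst])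
        show "finite {u\<in>F. x \<in> b u}" using finF by simp
        show "{u\<in>F. x \<in> b u} \<subseteq> \<S>" by (auto simp: F_def)
        show "\<forall>u\<in>{u\<in>F. x \<in> b u}. x \<in> sball u" using q unfolding b_def by blast
      qed
      thus ?thesis using eq True by simp
    qed
  qed
  have V: "unit_ball_vol (real DIM('a)) > 0" by simp
  define V where "V = unit_ball_vol (real DIM('a))"
  have "(\<integral>\<^sup>+ x. (\<Sum>u\<in>F. indicator (b u) x) \<partial>(lborel :: 'a measure)) \<le> (\<integral>\<^sup>+ x. of_nat K * indicator Big x \<partial>lborel)"
    by (rule nn_integral_mono) (use pw in auto)
  moreover have "(\<integral>\<^sup>+ x. (\<Sum>u\<in>F. indicator (b u) x) \<partial>(lborel :: 'a measure)) = (\<Sum>u\<in>F. emeasure lborel (b u))"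
    by (subst nn_integral_sum) (auto simp: b_def borel_measurable_indicator_iff)
  moreover have "\<And>u. emeasure lborel (b u) = ennreal (V * \<rho> ^ DIM('a))"
    unfolding b_def V_def using rho by (subst emeasure_cball) auto
  moreover have "(\<integral>\<^sup>+ x. of_nat K * indicator Big x \<partial>(lborel :: 'a measure)) = of_nat K * emeasure lborel Big"
    by (rule nn_integral_cmult_indicator) (simp add: Big_def)
  moreover have "emeasure lborel Big = ennreal (V * (R + 2 * \<rho>) ^ DIM('a))"
    unfolding Big_def V_def using rho R by (subst emeasure_cball) auto
  ultimately have "of_nat (card F) * ennreal (V * \<rho> ^ DIM('a)) \<le> of_nat K * ennreal (V * (R + 2 * \<rho>) ^ DIM('a))"
    by simp
  hence "ennreal (real (card F) * (V * \<rho> ^ DIM('a))) \<le> ennreal (real K * (V * (R + 2 * \<rho>) ^ DIM('a)))"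
    using V rho R by (simp add: ennreal_of_nat_eq_real_of_nat ennreal_mult V_def)
  hence "real (card F) * (V * \<rho> ^ DIM('a)) \<le> real K * (V * (R + 2 * \<rho>) ^ DIM('a))"
    using V rho R by (subst (asm) ennreal_le_iff) (auto simp: V_def)
  hence "V * (real (card F) * \<rho> ^ DIM('a)) \<le> V * (real K * (R + 2 * \<rho>) ^ DIM('a))"
    by (simp add: algebra_simps)
  thus ?thesis using V unfolding F_def K_def V_def by (simp add: mult_le_cancel_left_pos)
qed


lemma exists_order:
  fixes \<S> :: "'a::euclidean_space set set"
  assumes "finite \<S>"
  shows "\<exists>L. linear_order_on \<S> L \<and> (\<forall>x y. (x, y) \<in> L \<longrightarrow> rad y \<le> rad x)"
proof -
  obtain g :: "'a set \<Rightarrow> nat" where g: "inj_on g \<S>" using finite_imp_inj_to_nat_seg[OF assms] by blast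
  define L where "L = {(x, y). x \<in> \<S> \<and> y \<in> \<S> \<and> (rad y < rad x \<or> (rad y = rad x \<and> g x \<le> g y))}"
  have "linear_order_on \<S> L"
    unfolding linear_order_on_def partial_order_on_def preorder_on_def refl_on_def trans_def antisym_def total_on_def
  proof (intro conjI allI impI ballI)
    show "L \<subseteq> \<S> \<times> \<S>" by (auto simp: L_def)
  next
    fix x assume "x \<in> \<S>" thus "(x, x) \<in> L" by (auto simp: L_def)
  next
    fix x y z assume "(x, y) \<in> L" "(y, z) \<in> L" thus "(x, z) \<in> L" by (auto simp: L_def)
  next
    fix x y assume "(x, y) \<in> L" "(y, x) \<in> L" thus "x = y" using g by (auto simp: L_def inj_on_def)
  next
    fix x y assume "x \<in> \<S>" "y \<in> \<S>" "x \<noteq> y" thus "(x, y) \<in> L \<or> (y, x) \<in> L"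
      using g by (auto simp: L_def inj_on_def)
  qed
  moreover have "\<forall>x y. (x, y) \<in> L \<longrightarrow> rad y \<le> rad x" by (auto simp: L_def)
  ultimately show ?thesis by blast
qed


lemma reach_geom:
  fixes \<S> :: "'a::euclidean_space set set"
  assumes sph: "\<forall>S\<in>\<S>. is_sphere S" and v: "v \<in> \<S>" and r: "r > 0"
    and Lrad: "\<forall>x y. (x, y) \<in> L \<longrightarrow> rad y \<le> rad x"
    and sr: "strongly_reachable \<S> sphere_adj L r v u"
  shows "rad v \<le> rad u \<and> u \<inter> cball (cen v) ((2 * real r - 1) * rad v) \<noteq> {}"
proof -
  define \<rho> where "\<rho> = rad v"
  define c where "c = cen v"
  have sv: "is_sphere v" using v sph by auto
  have rho: "\<rho> > 0" using sphere_props[OF sv] by (simp add: \<rho>_def)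
  have vs: "v = sphere c \<rho>" using sphere_props[OF sv] by (simp add: \<rho>_def c_def)
  have uv: "(u, v) \<in> L" using sr by (simp add: strongly_reachable_def)
  obtain p where p: "is_path \<S> sphere_adj p" "hd p = v" "last p = u" "length p \<le> r + 1"
    "\<forall>w\<in>set p. w \<noteq> u \<longrightarrow> (v, w) \<in> L"
    using sr unfolding strongly_reachable_def by blast
  define n where "n = length p"
  have pne: "p \<noteq> []" and dist: "distinct p" and pS: "set p \<subseteq> \<S>"
    and adj: "\<And>i. Suc i < n \<Longrightarrow> sphere_adj (p ! i) (p ! Suc i)"
    using p(1) unfolding is_path_def n_def by auto
  have n1: "n \<ge> 1" using pne by (simp add: n_def Suc_le_eq)
  have ulast: "u = p ! (n - 1)" using p(3) pne by (simp add: n_def last_conv_nth)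
  have v0: "p ! 0 = v" using p(2) pne by (simp add: hd_conv_nth)
  have small: "\<And>i. i + 1 < n \<Longrightarrow> rad (p ! i) \<le> \<rho>"
  proof -
    fix i assume i: "i + 1 < n"
    have "p ! i \<noteq> u" using ulast dist i by (simp add: n_def nth_eq_iff_index_eq)
    moreover have "p ! i \<in> set p" using i by (simp add: n_def)
    ultimately have "(v, p ! i) \<in> L" using p(5) by blast
    thus "rad (p ! i) \<le> \<rho>" using Lrad by (simp add: \<rho>_def)
  qed
  have inc: "\<And>i. i + 1 < n \<Longrightarrow> p ! i \<subseteq> cball c ((2 * real i + 1) * \<rho>)"
  proof -
    fix i show "i + 1 < n \<Longrightarrow> p ! i \<subseteq> cball c ((2 * real i + 1) * \<rho>)"
    proof (induction i)
      case 0
      show ?case using v0 vs by auto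
    next
      case (Suc i)
      have IH: "p ! i \<subseteq> cball c ((2 * real i + 1) * \<rho>)" using Suc by simp
      have a: "sphere_adj (p ! i) (p ! Suc i)" using adj Suc.prems by simp
      then obtain z where z: "z \<in> p ! i" "z \<in> p ! Suc i" unfolding sphere_adj_def by blast
      have "p ! Suc i \<in> set p" using Suc.prems by (simp add: n_def)
      hence sw: "is_sphere (p ! Suc i)" using pS sph by auto
      have rw: "rad (p ! Suc i) \<le> \<rho>" using small Suc.prems by simp
      have "z \<in> sphere (cen (p ! Suc i)) (rad (p ! Suc i))" using z(2) sphere_props(2)[OF sw] by simp
      hence "sphere (cen (p ! Suc i)) (rad (p ! Suc i)) \<subseteq> cball c ((2 * real i + 1) * \<rho> + 2 * rad (p ! Suc i))"
        using sphere_in_cball z(1) IH by blast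
      moreover have "cball c ((2 * real i + 1) * \<rho> + 2 * rad (p ! Suc i)) \<subseteq> cball c ((2 * real (Suc i) + 1) * \<rho>)"
        using rw by (intro subset_cball) (simp add: algebra_simps)
      ultimately show ?case using sphere_props(2)[OF sw] by auto
    qed
  qed
  have rr: "(1::real) \<le> 2 * real r - 1" using r by simp
  have "u \<inter> cball c ((2 * real r - 1) * \<rho>) \<noteq> {}"
  proof (cases "n = 1")
    case True
    hence "u = v" using ulast v0 by simp
    obtain e :: 'a where e: "norm e = 1" using vector_choose_size[of 1] by auto
    have "c + \<rho> *\<^sub>R e \<in> u" using \<open>u = v\<close> vs e rho by (simp add: dist_norm)
    moreover have "c + \<rho> *\<^sub>R e \<in> cball c ((2 * real r - 1) * \<rho>)"
      using e rho rr by (simp add: dist_norm mult_right_mono)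
    ultimately show ?thesis by blast
  next
    case False
    hence n2: "n \<ge> 2" using n1 by simp
    define m where "m = n - 2"
    have "sphere_adj (p ! m) (p ! Suc m)" using adj n2 by (simp add: m_def)
    moreover have "Suc m = n - 1" using n2 by (simp add: m_def)
    ultimately obtain z where z: "z \<in> p ! m" "z \<in> u" using ulast unfolding sphere_adj_def by auto
    have "m + 1 < n" using n2 by (simp add: m_def)
    hence "z \<in> cball c ((2 * real m + 1) * \<rho>)" using inc[of m] z by blast
    moreover have "(2 * real m + 1) * \<rho> \<le> (2 * real r - 1) * \<rho>"
    proof -
      have "m + 1 \<le> r" using p(4) n2 by (simp add: m_def n_def)
      hence "2 * real m + 1 \<le> 2 * real r - 1" by linarith
      thus ?thesis using rho by (simp add: mult_right_mono)
    qed
    ultimately have "z \<in> cball c ((2 * real r - 1) * \<rho>)" by auto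
    thus ?thesis using z by blast
  qed
  moreover have "rad v \<le> rad u" using Lrad uv by blast
  ultimately show ?thesis by (simp add: \<rho>_def c_def)
qed


theorem lemma4p3:
  fixes \<S> :: "'a::euclidean_space set set" and t k r :: nat
  assumes "DIM('a) \<ge> 2" and "t > 0" and "k > 0"
    and "finite \<S>" and "\<forall>S\<in>\<S>. is_sphere S"
    and "\<not> contains_Ktt \<S> sphere_adj t"
    and "\<forall>N. N \<subseteq> \<S> \<and> nested N \<longrightarrow> card N \<le> k"
    and "r > 0"
  shows "scol \<S> sphere_adj r \<le> 2 * k * t * (2 * r + 2) ^ DIM('a)"
proof -
  note dim = assms(1) and fin = assms(4) and sph = assms(5) and noK = assms(6) and nst = assms(7)
    and r = assms(8)
  define B where "B = 2 * k * t * (2 * r + 2) ^ DIM('a)"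
  obtain L where L: "linear_order_on \<S> L" "\<forall>x y. (x, y) \<in> L \<longrightarrow> rad y \<le> rad x"
    using exists_order[OF fin] by blast
  have each: "card (sreach_set \<S> sphere_adj L r v) \<le> B" if v: "v \<in> \<S>" for v
  proof -
    define \<rho> where "\<rho> = rad v"
    have sv: "is_sphere v" using v sph by auto
    have rho: "\<rho> > 0" using sphere_props[OF sv] by (simp add: \<rho>_def)
    define R where "R = (2 * real r - 1) * \<rho>"
    have R: "R \<ge> 0" using r rho by (simp add: R_def)
    define F where "F = {u\<in>\<S>. \<rho> \<le> rad u \<and> u \<inter> cball (cen v) R \<noteq> {}}"
    have "sreach_set \<S> sphere_adj L r v \<subseteq> F"
      using reach_geom[OF sph v r L(2)] unfolding sreach_set_def F_def R_def \<rho>_def by auto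
    hence c1: "card (sreach_set \<S> sphere_adj L r v) \<le> card F"
      by (rule card_mono[rotated]) (simp add: F_def fin)
    have "real (card F) * \<rho> ^ DIM('a) \<le> real (k * (2 * t - 1)) * (R + 2 * \<rho>) ^ DIM('a)"
      unfolding F_def by (rule count_bound[OF dim sph noK nst fin rho R])
    also have "R + 2 * \<rho> = (2 * real r + 1) * \<rho>" by (simp add: R_def algebra_simps)
    also have "real (k * (2 * t - 1)) * ((2 * real r + 1) * \<rho>) ^ DIM('a) = (real (k * (2 * t - 1)) * (2 * real r + 1) ^ DIM('a)) * \<rho> ^ DIM('a)"
      by (simp only: power_mult_distrib mult.assoc)
    finally have "real (card F) * \<rho> ^ DIM('a) \<le> (real (k * (2 * t - 1)) * (2 * real r + 1) ^ DIM('a)) * \<rho> ^ DIM('a)" .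
    hence "real (card F) \<le> real (k * (2 * t - 1)) * (2 * real r + 1) ^ DIM('a)"
      using rho by simp
    also have "\<dots> \<le> real (2 * k * t) * (2 * real r + 2) ^ DIM('a)"
    proof (intro mult_mono power_mono)
      have "k * (2 * t - 1) \<le> 2 * k * t" by (simp add: algebra_simps diff_le_self)
      thus "real (k * (2 * t - 1)) \<le> real (2 * k * t)" by (simp only: of_nat_le_iff)
    qed auto
    also have "\<dots> = real B" by (simp add: B_def add.commute)
    finally have "card F \<le> B" by linarith
    thus ?thesis using c1 by simp
  qed
  have rw: "r_width \<S> sphere_adj L r \<le> B"
    unfolding r_width_def using fin each by (subst Max_le_iff) auto
  have finL: "finite {r_width \<S> sphere_adj L r | L. linear_order_on \<S> L}"
  proof -
    have "{r_width \<S> sphere_adj L r | L. linear_order_on \<S> L} \<subseteq> (\<lambda>L. r_width \<S> sphere_adj L r) ` Pow (\<S> \<times> \<S>)"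
      by (auto simp: linear_order_on_def partial_order_on_def preorder_on_def)
    moreover have "finite ((\<lambda>L. r_width \<S> sphere_adj L r) ` Pow (\<S> \<times> \<S>))" using fin by simp
    ultimately show ?thesis by (rule finite_subset)
  qed
  have "scol \<S> sphere_adj r \<le> r_width \<S> sphere_adj L r"
    unfolding scol_def using finL L(1) by (intro Min_le) auto
  thus ?thesis using rw by (simp add: B_def)
qed

end
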